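(* Let $m$ be a positive integer and $k$ a positive integer. If $\nu_2(m)$ is odd and $k$ is even, then $S_k(m)$ is empty.
   Context: For a positive integer $x$, $\nu_2(x)$ denotes the largest integer $e$ such that $2^e$ divides $x$. For a positive integer $m$, consider positive rational solutions $(x,y)$ of $x^y = y^{mx}$ with $x \neq 1$. For such a solution, $r = \log y / \log x$ is a positive rational number (so $y = x^r$); write $r = a/b$ with $a,b$ positive coprime integers. For an integer $k \ge 1$, $S_k(m)$ denotes the set of such solutions $(x,y)$ for which $|a-b| = k$. *)

theory Defs
  imports Complex_Main "HOL-Computational_Algebra.Primes"
begin

definition nu2 :: "nat \<Rightarrow> nat" where
  "nu2 x = multiplicity (2::nat) x"

definition S :: "nat \<Rightarrow> nat \<Rightarrow> (rat \<times> rat) set" where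
  "S k m = {(x, y). x > 0 \<and> y > 0 \<and> x \<noteq> 1 \<and>
      real_of_rat x powr real_of_rat y = real_of_rat y powr (real m * real_of_rat x) \<and>
      (\<exists>a b :: nat. a > 0 \<and> b > 0 \<and> coprime a b \<and>
          ln (real_of_rat y) / ln (real_of_rat x) = real a / real b \<and>
          \<bar>int a - int b\<bar> = int k)}"

end

theory Submission
  imports Defs
begin

lemma key:
  fixes m a b u v k :: nat
  assumes "m > 0" "u > 0" "v > 0" "odd a" "odd b" "odd (multiplicity 2 m)" "even k"
  shows "(m*a)^b * u^k \<noteq> b^b * v^k"
proof
  assume h: "(m*a)^b * u^k = b^b * v^k"
  have a0: "a > 0" "b > 0" using assms by (auto intro!: Nat.gr0I)
  have ma: "multiplicity 2 a = 0" "multiplicity 2 b = 0"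
    using assms by (auto intro!: not_dvd_imp_multiplicity_0)
  have p2: "prime (2::nat)" by simp
  have "multiplicity 2 ((m*a)^b * u^k) = b * multiplicity 2 m + k * multiplicity 2 u"
    using assms a0 ma p2
    by (simp add: prime_elem_multiplicity_mult_distrib prime_elem_multiplicity_power_distrib)
  moreover have "multiplicity 2 (b^b * v^k) = k * multiplicity 2 v"
    using assms a0 ma p2
    by (simp add: prime_elem_multiplicity_mult_distrib prime_elem_multiplicity_power_distrib)
  ultimately have "b * multiplicity 2 m + k * multiplicity 2 u = k * multiplicity 2 v"
    using h by simp
  then show False using assms by (metis even_add even_mult_iff)
qed

lemma rat_pos_frac:
  fixes x :: rat
  assumes "x > 0"
  obtains p q :: nat where "p > 0" "q > 0" "real_of_rat x = real p / real q"
proof -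
  obtain n d where nd: "quotient_of x = (n, d)" by (cases "quotient_of x") auto
  have d: "d > 0" using quotient_of_denom_pos[OF nd] .
  have xe: "x = of_int n / of_int d" using quotient_of_div[OF nd] .
  have n: "n > 0" using assms xe d
  proof -
    have "(0::rat) < of_int n / of_int d" using assms xe by simp
    hence "(0::rat) < of_int n" using d by (simp add: zero_less_divide_iff)
    thus ?thesis by simp
  qed
  have "real_of_rat x = real (nat n) / real (nat d)"
    using xe n d by (simp add: of_rat_divide)
  then show ?thesis using that[of "nat n" "nat d"] n d by simp
qed

theorem lemma4:
  fixes m k :: nat
  assumes "m > 0" and "k > 0" and "odd (nu2 m)" and "even k"
  shows "S k m = {}"
proof (rule ccontr)
  assume "S k m \<noteq> {}"
  then obtain x y where xy: "(x, y) \<in> S k m" by auto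
  define X where "X = real_of_rat x"
  define Y where "Y = real_of_rat y"
  obtain a b :: nat where ab: "a > 0" "b > 0" "coprime a b"
      "ln Y / ln X = real a / real b" "\<bar>int a - int b\<bar> = int k"
    using xy unfolding S_def X_def Y_def by auto
  have x0: "x > 0" "y > 0" "x \<noteq> 1" and pe: "X powr Y = Y powr (real m * X)"
    using xy unfolding S_def X_def Y_def by auto
  have X0: "X > 0" "Y > 0" "X \<noteq> 1" using x0 unfolding X_def Y_def by auto
  have lX: "ln X \<noteq> 0" using X0 by simp
  have lY: "ln Y = real a / real b * ln X" using ab(4) lX by (simp add: field_simps)
  have "ln (X powr Y) = ln (Y powr (real m * X))" using pe by simp
  hence "Y * ln X = real m * X * ln Y" using X0 by (simp add: ln_powr)
  hence "Y * ln X = (real m * X * real a / real b) * ln X" using lY by simp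
  hence "Y * ln X = (real m * X * real a / real b) * ln X" by simp
  hence Ye: "Y = real m * X * real a / real b" using lX by (metis mult_right_cancel)
  have "ln (Y ^ b) = ln (X ^ a)" using X0 lY ab by (simp add: ln_realpow)
  hence "Y ^ b = X ^ a" using X0 by simp
  hence eq: "(real m * real a) ^ b * X ^ b = real b ^ b * X ^ a"
    using Ye ab by (simp add: power_divide power_mult_distrib field_simps)
  have oddab: "odd a" "odd b"
  proof -
    have "even (int a - int b)" using ab(5) assms(4)
      by (metis abs_if even_minus even_of_nat)
    hence "even a = even b" by simp
    moreover have "\<not> (even a \<and> even b)" using ab(3)
      by (metis coprime_common_divisor_nat dvd_refl even_numeral odd_one)
    ultimately show "odd a" "odd b" by auto
  qed
  obtain p q :: nat where pq: "p > 0" "q > 0" "X = real p / real q"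
    using rat_pos_frac[OF x0(1)] X_def by metis
  have Xk: "X ^ k = real p ^ k / real q ^ k" using pq by (simp add: power_divide)
  have "\<exists>u v :: nat. u > 0 \<and> v > 0 \<and> (m*a)^b * u^k = b^b * v^k"
  proof (cases "a \<ge> b")
    case True
    hence ak: "a = b + k" using ab(5) by linarith
    have "(real m * real a) ^ b * X ^ b = real b ^ b * X ^ k * X ^ b"
      using eq ak by (simp add: power_add)
    hence "(real m * real a) ^ b = real b ^ b * X ^ k" using X0 by simp
    hence "(real m * real a) ^ b * real q ^ k = real b ^ b * real p ^ k"
      using Xk pq by (simp add: field_simps)
    hence "real ((m*a)^b * q^k) = real (b^b * p^k)" by simp
    hence "(m*a)^b * q^k = b^b * p^k" by linarith
    then show ?thesis using pq by blast
  next
    case False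
    hence bk: "b = a + k" using ab(5) by linarith
    have "((real m * real a) ^ b * X ^ k) * X ^ a = real b ^ b * X ^ a"
      using eq bk by (simp add: power_add mult_ac)
    hence "(real m * real a) ^ b * X ^ k = real b ^ b" using X0 by (metis mult_right_cancel power_not_zero less_irrefl)
    hence "(real m * real a) ^ b * real p ^ k = real b ^ b * real q ^ k"
      using Xk pq by (simp add: field_simps)
    hence "real ((m*a)^b * p^k) = real (b^b * q^k)" by simp
    hence "(m*a)^b * p^k = b^b * q^k" by linarith
    then show ?thesis using pq by blast
  qed
  then obtain u v :: nat where "u > 0" "v > 0" "(m*a)^b * u^k = b^b * v^k" by blast
  moreover have "odd (multiplicity 2 m)" using assms(3) by (simp add: nu2_def)
  ultimately show False using key[of m u v a b k] assms oddab by blast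
qed

end
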